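(* Let $A$ be a distributive meet-complemented lattice in which $\Box x$, $\Diamond x$ exist for every $x\in A$ and in which the relative meet-complement $a\to b=\max\{c\in A: a\wedge c\le b\}$ exists for all $a,b\in A$. Then for all $a,b\in A$: (1) $\Box(a\to b)\le\Box a\to\Box b$; (2) $\Box(a\to b)\le\Diamond a\to\Diamond b$; (3) $\Diamond a\to\Box b\le\Box(a\to b)$.
   Context: A meet-complemented lattice is a lattice $(L,\le)$ such that for every $a\in L$ the element $\neg a=\max\{b\in L: a\wedge b\le c\ \text{for all } c\in L\}$ exists; it is bounded with bottom $0$ and top $1$. For $a\in L$, $\Box a=\max\{b\in L: a\vee\neg b=1\}$ and $\Diamond a=\min\{b\in L: \neg a\vee b=1\}$. *)

theory Defs
  imports Main
begin

definition is_max :: "'a::order set \<Rightarrow> 'a \<Rightarrow> bool" where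
  "is_max S m \<longleftrightarrow> m \<in> S \<and> (\<forall>x\<in>S. x \<le> m)"

definition is_min :: "'a::order set \<Rightarrow> 'a \<Rightarrow> bool" where
  "is_min S m \<longleftrightarrow> m \<in> S \<and> (\<forall>x\<in>S. m \<le> x)"

definition mc_set :: "'a::lattice \<Rightarrow> 'a set" where
  "mc_set a = {b. \<forall>c. inf a b \<le> c}"

definition mc_neg :: "'a::lattice \<Rightarrow> 'a" where
  "mc_neg a = (THE m. is_max (mc_set a) m)"

definition box_set :: "'a::bounded_lattice \<Rightarrow> 'a set" where
  "box_set a = {b. sup a (mc_neg b) = top}"

definition mc_box :: "'a::bounded_lattice \<Rightarrow> 'a" where
  "mc_box a = (THE m. is_max (box_set a) m)"

definition dia_set :: "'a::bounded_lattice \<Rightarrow> 'a set" where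
  "dia_set a = {b. sup (mc_neg a) b = top}"

definition mc_dia :: "'a::bounded_lattice \<Rightarrow> 'a" where
  "mc_dia a = (THE m. is_min (dia_set a) m)"

definition rimp_set :: "'a::lattice \<Rightarrow> 'a \<Rightarrow> 'a set" where
  "rimp_set a b = {c. inf a c \<le> b}"

definition rimp :: "'a::lattice \<Rightarrow> 'a \<Rightarrow> 'a" where
  "rimp a b = (THE m. is_max (rimp_set a b) m)"

end

theory Submission
  imports Defs
begin

lemma dl1: "inf (sup a p) (sup r q) \<le> sup (inf a r) (sup p q)" for a::"'a::distrib_lattice"
  by (simp add: inf_sup_distrib1 inf_sup_distrib2 le_supI1 le_supI2 le_infI1 le_infI2)

lemma max_the: "\<exists>m. is_max S m \<Longrightarrow> is_max S (THE m. is_max S m)"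
  by (rule theI') (auto simp: is_max_def intro: order_antisym)

lemma min_the: "\<exists>m. is_min S m \<Longrightarrow> is_min S (THE m. is_min S m)"
  by (rule theI') (auto simp: is_min_def intro: order_antisym)

theorem proposition27:
  fixes a b :: "'a::{distrib_lattice, bounded_lattice}"
  assumes meet_compl: "\<forall>x::'a. \<exists>m. is_max (mc_set x) m"
    and box_ex: "\<forall>x::'a. \<exists>m. is_max (box_set x) m"
    and dia_ex: "\<forall>x::'a. \<exists>m. is_min (dia_set x) m"
    and rimp_ex: "\<forall>x y::'a. \<exists>m. is_max (rimp_set x y) m"
  shows "mc_box (rimp a b) \<le> rimp (mc_box a) (mc_box b)
         \<and> mc_box (rimp a b) \<le> rimp (mc_dia a) (mc_dia b)
         \<and> rimp (mc_dia a) (mc_box b) \<le> mc_box (rimp a b)"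
proof -
  have N1: "inf x (mc_neg x) = bot" for x :: 'a
    using max_the[OF meet_compl[rule_format, of x]]
    unfolding is_max_def mc_set_def mc_neg_def by (auto intro: order_antisym)
  have N2: "inf x y = bot \<Longrightarrow> y \<le> mc_neg x" for x y :: 'a
  proof -
    assume h: "inf x y = bot"
    have "y \<in> mc_set x" unfolding mc_set_def
    proof (rule CollectI, rule allI)
      fix c :: 'a show "inf x y \<le> c" using h by simp
    qed
    thus ?thesis using max_the[OF meet_compl[rule_format, of x]]
      unfolding is_max_def mc_neg_def by blast
  qed
  have R1: "inf x (rimp x y) \<le> y" for x y :: 'a
    using max_the[OF rimp_ex[rule_format, of x y]]
    unfolding is_max_def rimp_set_def rimp_def by auto
  have R2: "inf x c \<le> y \<Longrightarrow> c \<le> rimp x y" for x y c :: 'a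
    using max_the[OF rimp_ex[rule_format, of x y]]
    unfolding is_max_def rimp_set_def rimp_def by auto
  have B1: "sup x (mc_neg (mc_box x)) = top" for x :: 'a
    using max_the[OF box_ex[rule_format, of x]]
    unfolding is_max_def box_set_def mc_box_def by auto
  have B2: "sup x (mc_neg c) = top \<Longrightarrow> c \<le> mc_box x" for x c :: 'a
    using max_the[OF box_ex[rule_format, of x]]
    unfolding is_max_def box_set_def mc_box_def by auto
  have D1: "sup (mc_neg x) (mc_dia x) = top" for x :: 'a
    using min_the[OF dia_ex[rule_format, of x]]
    unfolding is_min_def dia_set_def mc_dia_def by auto
  have D2: "sup (mc_neg x) c = top \<Longrightarrow> mc_dia x \<le> c" for x c :: 'a
    using min_the[OF dia_ex[rule_format, of x]]
    unfolding is_min_def dia_set_def mc_dia_def by auto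
  have anti: "x \<le> y \<Longrightarrow> mc_neg y \<le> mc_neg x" for x y :: 'a
  proof -
    assume "x \<le> y"
    hence "inf x (mc_neg y) \<le> inf y (mc_neg y)" by (rule inf_mono) simp
    thus ?thesis using N1[of y] N2[of x "mc_neg y"] by (simp add: bot_unique)
  qed
  have negsup: "sup (mc_neg x) (mc_neg y) \<le> mc_neg (inf x y)" for x y :: 'a
    by (intro sup_least anti) simp_all
  define r where "r = rimp a b"
  have P1: "mc_box r \<le> rimp (mc_box a) (mc_box b)"
  proof (rule R2, rule B2)
    let ?x = "mc_box a" and ?y = "mc_box r"
    have "top = inf (sup a (mc_neg ?x)) (sup r (mc_neg ?y))" using B1 by simp
    also have "\<dots> \<le> sup (inf a r) (sup (mc_neg ?x) (mc_neg ?y))" by (rule dl1)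
    also have "\<dots> \<le> sup b (mc_neg (inf ?x ?y))"
      using R1[of a b] negsup[of ?x ?y] unfolding r_def by (rule sup_mono)
    finally show "sup b (mc_neg (inf ?x ?y)) = top" by (simp add: top_unique)
  qed
  have P2: "mc_box r \<le> rimp (mc_dia a) (mc_dia b)"
  proof (rule R2)
    let ?y = "mc_box r" and ?d = "mc_dia a" and ?e = "mc_dia b"
    have "inf (inf r (mc_neg b)) a = inf (inf a r) (mc_neg b)" by (simp add: inf_aci)
    also have "\<dots> \<le> inf b (mc_neg b)" unfolding r_def by (rule inf_mono[OF R1 order_refl])
    finally have "inf (inf r (mc_neg b)) a = bot" using N1[of b] by (simp add: bot_unique)
    hence rb: "inf r (mc_neg b) \<le> mc_neg a" using N2 by (simp add: inf.commute)
    have "r = inf r (sup (mc_neg b) ?e)" using D1[of b] by simp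
    also have "\<dots> = sup (inf r (mc_neg b)) (inf r ?e)" by (rule inf_sup_distrib1)
    also have "\<dots> \<le> sup (mc_neg a) ?e" using rb by (simp add: le_supI1 le_supI2 le_infI2)
    finally have "r \<le> sup (mc_neg a) ?e" .
    hence "sup r (mc_neg ?y) \<le> sup (sup (mc_neg a) ?e) (mc_neg ?y)" by (rule sup_mono) simp
    hence "top \<le> sup (mc_neg a) (sup ?e (mc_neg ?y))"
      using B1[of r] by (simp add: sup_assoc)
    hence "?d \<le> sup ?e (mc_neg ?y)" using D2 by (simp add: top_unique)
    hence "inf ?d ?y \<le> inf (sup ?e (mc_neg ?y)) ?y" by (rule inf_mono) simp
    also have "\<dots> = sup (inf ?e ?y) (inf (mc_neg ?y) ?y)" by (rule inf_sup_distrib2)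
    also have "\<dots> \<le> ?e" using N1[of ?y] by (simp add: inf.commute le_infI1)
    finally show "inf ?d ?y \<le> ?e" .
  qed
  have P3: "rimp (mc_dia a) (mc_box b) \<le> mc_box r"
  proof (rule B2)
    let ?z = "rimp (mc_dia a) (mc_box b)" and ?d = "mc_dia a" and ?x = "mc_box b"
    have na: "mc_neg a \<le> r" unfolding r_def
      by (rule R2) (metis N1 bot.extremum inf.commute)
    have br: "b \<le> r" unfolding r_def by (rule R2) simp
    have "inf (inf ?d (mc_neg ?x)) ?z = bot"
    proof -
      have "inf (inf ?d (mc_neg ?x)) ?z = inf (inf ?d ?z) (mc_neg ?x)" by (simp add: inf_aci)
      also have "\<dots> \<le> inf ?x (mc_neg ?x)" by (rule inf_mono[OF R1 order_refl])
      finally have "inf (inf ?d (mc_neg ?x)) ?z \<le> inf ?x (mc_neg ?x)" .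
      thus ?thesis using N1[of ?x] by (simp add: bot_unique)
    qed
    hence dz: "inf ?d (mc_neg ?x) \<le> mc_neg ?z" using N2 by (simp add: inf.commute)
    have "top = inf (sup (mc_neg a) ?d) (sup b (mc_neg ?x))" using B1 D1 by simp
    also have "\<dots> \<le> sup (sup (mc_neg a) b) (inf ?d (mc_neg ?x))"
      by (simp add: inf_sup_distrib1 inf_sup_distrib2 le_supI1 le_supI2 le_infI1 le_infI2)
    also have "\<dots> \<le> sup r (mc_neg ?z)" using na br dz by (simp add: le_supI1 le_supI2)
    finally show "sup r (mc_neg ?z) = top" by (simp add: top_unique)
  qed
  show ?thesis using P1 P2 P3 unfolding r_def by simp
qed

end
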